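(* Let $\{x^k\}$ be generated by the ABP algorithm described in the context, and assume (A1)–(A7): (A1) $\mathcal F$ is continuously differentiable; (A2) $C$, $Q$ nonempty closed convex, $z_i^*>-\infty$ for each $i$; (A3) each $f_i$ convex; (A4) $\Omega\ne\emptyset$; (A5) $\lambda_k>0$, $\sum\lambda_k=\infty$, $\sum\lambda_k^2<\infty$; (A6) $0<\underline\alpha\le\alpha_k\le\bar\alpha$, $0<\underline\beta\le\beta_k\le\bar\beta$, $0<\underline\gamma\le\gamma_k\le\bar\gamma$ for all $k$; (A7) $\varphi_{\mathrm{lb}}=\varphi^*$. Then $\sum_{k=0}^\infty\lambda_k\Phi_k<\infty$.
   Context: Let $n,m\ge1$, $\mathcal F=(f_1,\dots,f_m)\colon\mathbb R^n\to\mathbb R^m$, $C\subset\mathbb R^n$, $Q\subset\mathbb R^m$, $Q^+:=Q-\mathbb R^m_+=\{y-u:y\in Q,u\in\mathbb R^m_+\}$; $P_S$ is Euclidean projection onto a nonempty closed convex set $S$. Let $z_i^*:=\inf_{x\in C}f_i(x)$, fix $r$ with $r_i>0$, $\sum r_i=1$. Define $\varphi(x):=\max_ir_i(f_i(x)-z_i^* )$, $H(x):=\tfrac12\mathrm{dist}^2(x,C)$, $G(x):=\tfrac12\mathrm{dist}^2(\mathcal F(x),Q^+)$, $\mathcal S:=\{x:H(x)=0,G(x)=0\}$, $\varphi^*:=\inf_{\mathcal S}\varphi$, $\Omega:=\{x\in\mathcal S:\varphi(x)=\varphi^*\}$, $\varphi_{\mathrm{lb}}:=\inf_C\varphi$.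 ABP algorithm: given $x^0$, $\mu>0$, positive sequences $\{\alpha_k\},\{\beta_k\},\{\gamma_k\},\{\lambda_k\}$: $p^k:=P_{Q^+}(\mathcal F(x^k))$, $\rho^k:=\mathcal F(x^k)-p^k$, $z^k:=x^k-P_C(x^k)$, $v^k:=J_{\mathcal F}(x^k)^T\rho^k$, $w^k:=r_{i^*}\nabla f_{i^*}(x^k)$ with arbitrary $i^*\in\arg\max_ir_i(f_i(x^k)-z_i^* )$, $\Delta_k:=\varphi(x^k)-\varphi_{\mathrm{lb}}$, $d^k:=\alpha_k\mathbf 1_{\{\Delta_k\ge0\}}w^k+\beta_kz^k+\gamma_kv^k$, $\eta_k:=\max(\mu,\|d^k\|)$, $x^{k+1}:=x^k-(\lambda_k/\eta_k)d^k$. Notation: $H_k:=H(x^k)$, $G_k:=G(x^k)$, $\Delta_k^+:=\max(\Delta_k,0)$, $\Phi_k:=\alpha_k\Delta_k^++\beta_kH_k+\gamma_kG_k$. *)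

theory Defs
  imports "HOL-Analysis.Analysis"
begin

definition Qplus :: "(real^'m) set \<Rightarrow> (real^'m) set" where
  "Qplus Q = {y - u | y u. y \<in> Q \<and> (\<forall>i. 0 \<le> u $ i)}"

definition zstar :: "(real^'n \<Rightarrow> real^'m) \<Rightarrow> (real^'n) set \<Rightarrow> 'm \<Rightarrow> real" where
  "zstar F C i = Inf ((\<lambda>x. F x $ i) ` C)"

definition phi :: "(real^'n \<Rightarrow> real^'m) \<Rightarrow> (real^'n) set \<Rightarrow> real^'m \<Rightarrow> real^'n \<Rightarrow> real" where
  "phi F C r x = Max (range (\<lambda>i. r $ i * (F x $ i - zstar F C i)))"

definition Hfun :: "(real^'n) set \<Rightarrow> real^'n \<Rightarrow> real" where
  "Hfun C x = (infdist x C)^2 / 2"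

definition Gfun :: "(real^'n \<Rightarrow> real^'m) \<Rightarrow> (real^'m) set \<Rightarrow> real^'n \<Rightarrow> real" where
  "Gfun F Q x = (infdist (F x) (Qplus Q))^2 / 2"

definition feas :: "(real^'n \<Rightarrow> real^'m) \<Rightarrow> (real^'n) set \<Rightarrow> (real^'m) set \<Rightarrow> (real^'n) set" where
  "feas F C Q = {x. Hfun C x = 0 \<and> Gfun F Q x = 0}"

definition phistar :: "(real^'n \<Rightarrow> real^'m) \<Rightarrow> (real^'n) set \<Rightarrow> (real^'m) set \<Rightarrow> real^'m \<Rightarrow> real" where
  "phistar F C Q r = Inf (phi F C r ` feas F C Q)"

definition Omega :: "(real^'n \<Rightarrow> real^'m) \<Rightarrow> (real^'n) set \<Rightarrow> (real^'m) set \<Rightarrow> real^'m \<Rightarrow> (real^'n) set" where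
  "Omega F C Q r = {x \<in> feas F C Q. phi F C r x = phistar F C Q r}"

definition philb :: "(real^'n \<Rightarrow> real^'m) \<Rightarrow> (real^'n) set \<Rightarrow> real^'m \<Rightarrow> real" where
  "philb F C r = Inf (phi F C r ` C)"

definition jac :: "(real^'n \<Rightarrow> real^'m) \<Rightarrow> real^'n \<Rightarrow> real^'n^'m" where
  "jac F x = matrix (frechet_derivative F (at x))"

text \<open>Projection onto Q^+ (taken onto its closure; equals P_{Q^+} whenever Q^+ is closed).\<close>
definition projQp :: "(real^'m) set \<Rightarrow> real^'m \<Rightarrow> real^'m" where
  "projQp Q y = closest_point (closure (Qplus Q)) y"

definition abp_dir :: "(real^'n \<Rightarrow> real^'m) \<Rightarrow> (real^'n) set \<Rightarrow> (real^'m) set \<Rightarrow> real^'m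
   \<Rightarrow> real \<Rightarrow> real \<Rightarrow> real \<Rightarrow> 'm \<Rightarrow> real^'n \<Rightarrow> real^'n" where
  "abp_dir F C Q r a b g i xk =
     (if phi F C r xk - philb F C r \<ge> 0 then a else 0) *\<^sub>R ((r $ i) *\<^sub>R (jac F xk $ i))
     + b *\<^sub>R (xk - closest_point C xk)
     + g *\<^sub>R (transpose (jac F xk) *v (F xk - projQp Q (F xk)))"

definition PhiK :: "(real^'n \<Rightarrow> real^'m) \<Rightarrow> (real^'n) set \<Rightarrow> (real^'m) set \<Rightarrow> real^'m
   \<Rightarrow> real \<Rightarrow> real \<Rightarrow> real \<Rightarrow> real^'n \<Rightarrow> real" where
  "PhiK F C Q r a b g xk =
     a * max (phi F C r xk - philb F C r) 0 + b * Hfun C xk + g * Gfun F Q xk"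

end

theory Submission
  imports Defs
begin

lemma grad_ineq:
  fixes F :: "real^'n \<Rightarrow> real^'m"
  assumes dF: "F differentiable (at y)" and cv: "convex_on UNIV (\<lambda>z. F z $ i)"
  shows "F z $ i - F y $ i \<ge> (jac F y $ i) \<bullet> (z - y)"
proof -
  let ?D = "frechet_derivative F (at y)"
  let ?v = "z - y"
  have D: "(F has_derivative ?D) (at y)" using dF frechet_derivative_works by blast
  have bl: "bounded_linear ?D" using D has_derivative_bounded_linear by blast
  have jv: "(jac F y $ i) \<bullet> ?v = ?D ?v $ i"
    unfolding jac_def
    by (metis matrix_vector_mul(3)[OF bl] matrix_vector_mul_component)
  define g where "g t = F (y + t *\<^sub>R ?v) $ i" for t :: real
  have lin: "((\<lambda>t::real. y + t *\<^sub>R ?v) has_derivative (\<lambda>t. t *\<^sub>R ?v)) (at 0)"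
    by (auto intro!: derivative_eq_intros)
  have D0: "(F has_derivative ?D) (at (y + 0 *\<^sub>R ?v))" using D by simp
  have "((\<lambda>t. F (y + t *\<^sub>R ?v)) has_derivative (\<lambda>t. ?D (t *\<^sub>R ?v))) (at 0)"
    using has_derivative_compose[OF lin D0] by simp
  then have "(g has_derivative (\<lambda>t. ?D (t *\<^sub>R ?v) $ i)) (at 0)"
    unfolding g_def using bounded_linear.has_derivative[OF bounded_linear_vec_nth] by blast
  then have gd: "(g has_field_derivative (?D ?v $ i)) (at 0 within UNIV)"
    by (rule has_derivative_imp_has_field_derivative)
       (simp add: linear_simps(5)[OF bl])
  have gc: "convex_on UNIV g"
  proof (rule convex_onI)
    fix t a b :: real assume "t > 0" "t < 1"
    have "g ((1 - t) *\<^sub>R a + t *\<^sub>R b) = F ((1 - t) *\<^sub>R (y + a *\<^sub>R ?v) + t *\<^sub>R (y + b *\<^sub>R ?v)) $ i"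
      unfolding g_def by (simp add: algebra_simps)
    also have "\<dots> \<le> (1 - t) * g a + t * g b"
      unfolding g_def using convex_onD[OF cv, of t] \<open>t > 0\<close> \<open>t < 1\<close> by simp
    finally show "g ((1 - t) *\<^sub>R a + t *\<^sub>R b) \<le> (1 - t) * g a + t * g b" .
  qed simp
  have "g 1 - g 0 \<ge> (?D ?v $ i) * (1 - 0)"
    by (rule convex_on_imp_above_tangent[OF gc]) (use gd in auto)
  then show ?thesis using jv unfolding g_def by simp
qed

lemma proj_ineq:
  fixes T :: "(real^'n) set"
  assumes "closed T" "convex T" "xs \<in> T"
  shows "(y - closest_point T y) \<bullet> (y - xs) \<ge> (norm (y - closest_point T y))^2"
proof -
  let ?p = "closest_point T y"
  have "(y - ?p) \<bullet> (xs - ?p) \<le> 0" using closest_point_dot[OF assms(2,1,3)] .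
  moreover have "(y - ?p) \<bullet> (y - xs) = (y - ?p) \<bullet> (y - ?p) - (y - ?p) \<bullet> (xs - ?p)"
    by (simp add: inner_diff_right)
  ultimately show ?thesis by (simp add: power2_norm_eq_inner)
qed

lemma infdist_closest:
  fixes S :: "(real^'n) set"
  assumes "S \<noteq> {}"
  shows "infdist y S \<le> norm (y - closest_point (closure S) y)"
proof -
  let ?p = "closest_point (closure S) y"
  have p: "?p \<in> closure S" using closest_point_in_set assms by auto
  have "infdist ?p S = 0" using in_closure_iff_infdist_zero[OF assms] p by blast
  then show ?thesis using infdist_triangle[of y S ?p] by (simp add: dist_norm)
qed

lemma Qplus_props:
  fixes Q :: "(real^'m) set"
  assumes "convex Q" "Q \<noteq> {}"
  shows "convex (Qplus Q)" "Qplus Q \<noteq> {}"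
    "\<And>p u. p \<in> closure (Qplus Q) \<Longrightarrow> \<forall>i. 0 \<le> u $ i \<Longrightarrow> p - u \<in> closure (Qplus Q)"
proof -
  have eq: "Qplus Q = (\<Union>x\<in> Q. \<Union>y \<in> {u. \<forall>i. 0 \<le> u $ i}. {x - y})"
    unfolding Qplus_def by auto
  have "convex {u::real^'m. \<forall>i. 0 \<le> u $ i}"
    unfolding convex_def by (auto intro!: add_nonneg_nonneg mult_nonneg_nonneg)
  then show "convex (Qplus Q)" unfolding eq by (intro convex_differences assms)
  obtain q where "q \<in> Q" using assms by auto
  then have "q - 0 \<in> Qplus Q" unfolding Qplus_def by fastforce
  then show "Qplus Q \<noteq> {}" by auto
  fix p u :: "real^'m" assume p: "p \<in> closure (Qplus Q)" and u: "\<forall>i. 0 \<le> u $ i"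
  have sub: "(\<lambda>x. x - u) ` Qplus Q \<subseteq> Qplus Q"
  proof
    fix z assume "z \<in> (\<lambda>x. x - u) ` Qplus Q"
    then obtain y w where "y \<in> Q" "\<forall>i. 0 \<le> w $ i" "z = y - w - u" unfolding Qplus_def by auto
    then show "z \<in> Qplus Q" unfolding Qplus_def
      by (auto intro!: exI[of _ y] exI[of _ "w + u"] add_nonneg_nonneg simp: u algebra_simps)
  qed
  have "p - u \<in> (\<lambda>x. x - u) ` closure (Qplus Q)" using p by auto
  also have "\<dots> = closure ((\<lambda>x. x - u) ` Qplus Q)" by (simp add: closure_translation_subtract)
  also have "\<dots> \<subseteq> closure (Qplus Q)" using sub closure_mono by blast
  finally show "p - u \<in> closure (Qplus Q)" .
qed

lemma key_ineq:
  fixes F :: "real^'n \<Rightarrow> real^'m"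
    and C :: "(real^'n) set" and Q :: "(real^'m) set" and r :: "real^'m"
  assumes r_pos: "\<forall>i. r $ i > 0"
    and dF: "\<forall>y. F differentiable (at y)"
    and C: "C \<noteq> {}" "closed C" "convex C" and Q: "Q \<noteq> {}" "convex Q"
    and cvx: "\<forall>i. convex_on UNIV (\<lambda>y. F y $ i)"
    and xs: "xs \<in> Omega F C Q r"
    and A7: "philb F C r = phistar F C Q r"
    and imax: "\<forall>j. r $ j * (F y $ j - zstar F C j) \<le> r $ i * (F y $ i - zstar F C i)"
    and abg: "a \<ge> 0" "b \<ge> 0" "g \<ge> 0"
  shows "inner (abp_dir F C Q r a b g i y) (y - xs) \<ge> PhiK F C Q r a b g y"
proof -
  have xsf: "Hfun C xs = 0" "Gfun F Q xs = 0" and phixs: "phi F C r xs = philb F C r"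
    using xs A7 unfolding Omega_def feas_def by auto
  have xsC: "xs \<in> C"
  proof -
    have "infdist xs C = 0" using xsf(1) unfolding Hfun_def by simp
    then show ?thesis using in_closure_iff_infdist_zero[OF C(1)] closure_closed[OF C(2)] by auto
  qed
  have QP: "convex (Qplus Q)" "Qplus Q \<noteq> {}" using Qplus_props[OF Q(2,1)] by auto
  have Fxs: "F xs \<in> closure (Qplus Q)"
  proof -
    have "infdist (F xs) (Qplus Q) = 0" using xsf(2) unfolding Gfun_def by simp
    then show ?thesis using in_closure_iff_infdist_zero[OF QP(2)] by auto
  qed
  let ?D = "phi F C r y - philb F C r"
  have phiy: "phi F C r y = r $ i * (F y $ i - zstar F C i)"
    unfolding phi_def by (rule Max_eqI) (use imax in auto)
  have phix: "phi F C r xs \<ge> r $ i * (F xs $ i - zstar F C i)"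
    unfolding phi_def by (rule Max_ge) auto
  have gi: "F xs $ i - F y $ i \<ge> (jac F y $ i) \<bullet> (xs - y)"
    using grad_ineq dF cvx by blast
  have "(jac F y $ i) \<bullet> (xs - y) = - ((jac F y $ i) \<bullet> (y - xs))"
    by (simp add: inner_diff_right)
  then have "r $ i * (F y $ i - F xs $ i) \<le> r $ i * ((jac F y $ i) \<bullet> (y - xs))"
    using gi r_pos[rule_format, of i] by (intro mult_left_mono) auto
  then have "?D \<le> r $ i * ((jac F y $ i) \<bullet> (y - xs))"
    using phiy phix phixs by (simp add: right_diff_distrib)
  then have T1: "a * max ?D 0 \<le> (if ?D \<ge> 0 then a else 0) * (r $ i * ((jac F y $ i) \<bullet> (y - xs)))"
    using abg by (auto intro: mult_left_mono)
  let ?z = "y - closest_point C y"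
  have "?z \<bullet> (y - xs) \<ge> (norm ?z)^2" using proj_ineq[OF C(2,3) xsC] .
  moreover have "infdist y C \<le> norm ?z"
    using infdist_closest[OF C(1), of y] closure_closed[OF C(2)] by simp
  moreover have "0 \<le> infdist y C" by (rule infdist_nonneg)
  ultimately have "Hfun C y \<le> ?z \<bullet> (y - xs)" unfolding Hfun_def
    using power_mono[of "infdist y C" "norm ?z" 2] zero_le_power2[of "infdist y C"] by linarith
  then have T2: "b * Hfun C y \<le> b * (?z \<bullet> (y - xs))" using abg(2) by (rule mult_left_mono)
  let ?J = "jac F y"
  let ?rho = "F y - projQp Q (F y)"
  let ?p = "projQp Q (F y)"
  have cQ: "closed (closure (Qplus Q))" "convex (closure (Qplus Q))"
    using QP convex_closure by auto
  have r1: "?rho \<bullet> (F y - F xs) \<ge> (norm ?rho)^2"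
    using proj_ineq[OF cQ Fxs, of "F y"] unfolding projQp_def .
  define u where "u = ?J *v (y - xs) - (F y - F xs)"
  have u: "\<forall>j. 0 \<le> u $ j"
  proof
    fix j
    have "F xs $ j - F y $ j \<ge> (?J $ j) \<bullet> (xs - y)"
      using grad_ineq dF cvx by blast
    moreover have "(?J $ j) \<bullet> (xs - y) = - ((?J $ j) \<bullet> (y - xs))"
      by (simp add: inner_diff_right)
    ultimately show "0 \<le> u $ j" unfolding u_def by (simp add: matrix_vector_mul_component)
  qed
  have pin: "?p \<in> closure (Qplus Q)" unfolding projQp_def
    using closest_point_in_set QP(2) by auto
  have "(F y - ?p) \<bullet> ((?p - u) - ?p) \<le> 0"
    using closest_point_dot[OF cQ(2,1) Qplus_props(3)[OF Q(2,1) pin u]] unfolding projQp_def .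
  then have r2: "?rho \<bullet> u \<ge> 0" by (simp add: inner_diff_right)
  have "transpose ?J *v ?rho = ?rho v* ?J"
    using vector_transpose_matrix[of ?rho "transpose ?J"] by simp
  then have "(transpose ?J *v ?rho) \<bullet> (y - xs) = ?rho \<bullet> (?J *v (y - xs))"
    by (simp add: dot_lmul_matrix)
  also have "\<dots> = ?rho \<bullet> u + ?rho \<bullet> (F y - F xs)" unfolding u_def by (simp add: inner_diff_right)
  finally have "(transpose ?J *v ?rho) \<bullet> (y - xs) \<ge> (norm ?rho)^2" using r1 r2 by linarith
  moreover have "infdist (F y) (Qplus Q) \<le> norm ?rho"
    using infdist_closest[OF QP(2), of "F y"] unfolding projQp_def .
  moreover have "0 \<le> infdist (F y) (Qplus Q)" by (rule infdist_nonneg)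
  ultimately have "Gfun F Q y \<le> (transpose ?J *v ?rho) \<bullet> (y - xs)" unfolding Gfun_def
    using power_mono[of "infdist (F y) (Qplus Q)" "norm ?rho" 2] zero_le_power2[of "infdist (F y) (Qplus Q)"] by linarith
  then have T3: "g * Gfun F Q y \<le> g * ((transpose ?J *v ?rho) \<bullet> (y - xs))"
    using abg(3) by (rule mult_left_mono)
  have "inner (abp_dir F C Q r a b g i y) (y - xs) = (if ?D \<ge> 0 then a else 0) * (r $ i * ((jac F y $ i) \<bullet> (y - xs)))
      + b * (?z \<bullet> (y - xs)) + g * ((transpose ?J *v ?rho) \<bullet> (y - xs))"
    unfolding abp_dir_def by (simp only: inner_add_left inner_scaleR_left mult.assoc)
  then show ?thesis
    unfolding PhiK_def using T1 T2 T3 by linarith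
qed

lemma cont_bound:
  fixes h :: "real^'n \<Rightarrow> 'b::real_normed_vector"
  assumes "continuous_on UNIV h"
  shows "\<exists>B. \<forall>y\<in>cball c R. norm (h y) \<le> B"
proof -
  have "compact (h ` cball c R)"
    by (rule compact_continuous_image[OF continuous_on_subset[OF assms] compact_cball]) simp
  then have "bounded (h ` cball c R)" by (rule compact_imp_bounded)
  then show ?thesis unfolding bounded_iff by auto
qed

lemma norm_step:
  fixes u v :: "real^'n"
  shows "(norm (u - c *\<^sub>R v))^2 = (norm u)^2 - 2 * c * (v \<bullet> u) + (c * norm v)^2"
  unfolding power_mult_distrib power2_norm_eq_inner
  by (simp add: inner_diff_left inner_diff_right inner_commute algebra_simps power2_eq_square)

theorem lemma13:
  fixes F :: "real^'n \<Rightarrow> real^'m"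
    and C :: "(real^'n) set" and Q :: "(real^'m) set" and r :: "real^'m"
    and x :: "nat \<Rightarrow> real^'n" and istar :: "nat \<Rightarrow> 'm"
    and mu :: real and alpha beta gamma lam :: "nat \<Rightarrow> real"
    and alo ahi blo bhi glo ghi :: real
  assumes r_pos: "\<forall>i. r $ i > 0" and r_sum: "(\<Sum>i\<in>UNIV. r $ i) = 1"
    and mu_pos: "mu > 0"
    and A1: "\<forall>y. F differentiable (at y)" "continuous_on UNIV (jac F)"
    and A2: "C \<noteq> {}" "closed C" "convex C" "Q \<noteq> {}" "closed Q" "convex Q"
        "\<forall>i. bdd_below ((\<lambda>y. F y $ i) ` C)"
    and A3: "\<forall>i. convex_on UNIV (\<lambda>y. F y $ i)"
    and A4: "Omega F C Q r \<noteq> {}"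
    and A5: "\<forall>k. lam k > 0" "\<not> summable lam" "summable (\<lambda>k. (lam k)^2)"
    and A6: "0 < alo" "\<forall>k. alo \<le> alpha k \<and> alpha k \<le> ahi"
        "0 < blo" "\<forall>k. blo \<le> beta k \<and> beta k \<le> bhi"
        "0 < glo" "\<forall>k. glo \<le> gamma k \<and> gamma k \<le> ghi"
    and A7: "philb F C r = phistar F C Q r"
    and istar: "\<forall>k j. r $ j * (F (x k) $ j - zstar F C j)
                      \<le> r $ istar k * (F (x k) $ istar k - zstar F C (istar k))"
    and iter: "\<forall>k. x (Suc k) = x k -
        (lam k / max mu (norm (abp_dir F C Q r (alpha k) (beta k) (gamma k) (istar k) (x k))))
          *\<^sub>R abp_dir F C Q r (alpha k) (beta k) (gamma k) (istar k) (x k)"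
  shows "summable (\<lambda>k. lam k * PhiK F C Q r (alpha k) (beta k) (gamma k) (x k))"
proof -
  obtain xs where xs: "xs \<in> Omega F C Q r" using A4 by auto
  have al: "0 \<le> alpha k" "alpha k \<le> ahi" for k using A6(1,2) by (meson less_imp_le order_trans)+
  have bl: "0 \<le> beta k" "beta k \<le> bhi" for k using A6(3,4) by (meson less_imp_le order_trans)+
  have gl: "0 \<le> gamma k" "gamma k \<le> ghi" for k using A6(5,6) by (meson less_imp_le order_trans)+
  define d where "d k = abp_dir F C Q r (alpha k) (beta k) (gamma k) (istar k) (x k)" for k
  define eta where "eta k = max mu (norm (d k))" for k
  define t where "t k = lam k / eta k" for k
  define a where "a k = (norm (x k - xs))^2" for k
  define P where "P k = PhiK F C Q r (alpha k) (beta k) (gamma k) (x k)" for k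
  have eta_pos: "eta k > 0" for k unfolding eta_def using mu_pos by auto
  have t_nn: "t k \<ge> 0" for k unfolding t_def using eta_pos[of k] A5(1) by (simp add: less_imp_le)
  have tn: "t k * norm (d k) \<le> lam k" for k
  proof -
    have "norm (d k) \<le> eta k" unfolding eta_def by simp
    then have "lam k * norm (d k) \<le> lam k * eta k" using A5(1) by (simp add: less_imp_le)
    then show ?thesis unfolding t_def using eta_pos[of k] by (simp add: divide_le_eq mult.commute)
  qed
  have tn2: "(t k * norm (d k))^2 \<le> (lam k)^2" for k
    using tn[of k] t_nn[of k] by (intro power_mono) auto
  have P_nn: "P k \<ge> 0" for k
    unfolding P_def PhiK_def Hfun_def Gfun_def using al bl gl by (auto intro!: add_nonneg_nonneg mult_nonneg_nonneg)
  have inner_ge: "(d k) \<bullet> (x k - xs) \<ge> P k" for k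
    unfolding d_def P_def
    by (rule key_ineq[OF r_pos A1(1) A2(1,2,3) A2(4,6) A3 xs A7])
       (use istar al bl gl in auto)
  have xstep: "x (Suc k) - xs = (x k - xs) - t k *\<^sub>R d k" for k
    using iter unfolding t_def eta_def d_def by simp
  have ineq: "a (Suc k) \<le> a k - 2 * t k * P k + (lam k)^2" for k
  proof -
    have "a (Suc k) = a k - 2 * t k * ((d k) \<bullet> (x k - xs)) + (t k * norm (d k))^2"
      unfolding a_def xstep norm_step ..
    moreover have "2 * t k * P k \<le> 2 * t k * ((d k) \<bullet> (x k - xs))"
      using inner_ge[of k] t_nn[of k] by (intro mult_left_mono) auto
    ultimately show ?thesis using tn2[of k] by linarith
  qed
  define S where "S = suminf (\<lambda>k. (lam k)^2)"
  have abound: "a k \<le> a 0 + S" for k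
  proof -
    have "a k \<le> a 0 + (\<Sum>j<k. (lam j)^2)"
    proof (induction k)
      case (Suc k)
      have "2 * t k * P k \<ge> 0" using t_nn[of k] P_nn[of k] by simp
      then show ?case using ineq[of k] Suc by (simp add: algebra_simps)
    qed simp
    moreover have "(\<Sum>j<k. (lam j)^2) \<le> S"
      unfolding S_def by (rule sum_le_suminf[OF A5(3)]) auto
    ultimately show ?thesis by linarith
  qed
  define R where "R = sqrt (a 0 + S)"
  have xin: "x k \<in> cball xs R" for k
  proof -
    have "norm (x k - xs) = sqrt (a k)" unfolding a_def by simp
    also have "\<dots> \<le> R" unfolding R_def using abound[of k] by (rule real_sqrt_le_mono)
    finally show ?thesis by (simp add: dist_norm norm_minus_commute)
  qed
  have QP: "convex (Qplus Q)" "Qplus Q \<noteq> {}" using Qplus_props[OF A2(6,4)] by auto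
  have cF: "continuous_on UNIV F"
    using A1(1) differentiable_at_imp_differentiable_on differentiable_imp_continuous_on by blast
  have cP: "continuous_on UNIV (projQp Q)" unfolding projQp_def
    by (rule continuous_on_closest_point) (use QP convex_closure in auto)
  have crho: "continuous_on UNIV (\<lambda>y. F y - projQp Q (F y))"
    by (intro continuous_intros cF continuous_on_compose2[OF cP cF]) auto
  have veq: "(\<lambda>y. transpose (jac F y) *v (F y - projQp Q (F y)))
      = (\<lambda>y. \<chi> j. \<Sum>i\<in>UNIV. jac F y $ i $ j * (F y - projQp Q (F y)) $ i)"
    by (auto simp: vec_eq_iff matrix_vector_mult_def transpose_def)
  have cv: "continuous_on UNIV (\<lambda>y. transpose (jac F y) *v (F y - projQp Q (F y)))"
    unfolding veq by (intro continuous_intros crho A1(2))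
  have cz: "continuous_on UNIV (\<lambda>y. y - closest_point C y)"
    by (intro continuous_intros continuous_on_closest_point A2(1,2,3))
  obtain B1 where B1: "\<forall>y\<in>cball xs R. norm (jac F y) \<le> B1" using cont_bound[OF A1(2)] by blast
  obtain B2 where B2: "\<forall>y\<in>cball xs R. norm (y - closest_point C y) \<le> B2" using cont_bound[OF cz] by blast
  obtain B3 where B3: "\<forall>y\<in>cball xs R. norm (transpose (jac F y) *v (F y - projQp Q (F y))) \<le> B3"
    using cont_bound[OF cv] by blast
  define Dm where "Dm = ahi * norm r * B1 + bhi * B2 + ghi * B3"
  have dbound: "norm (d k) \<le> Dm" for k
  proof -
    let ?y = "x k"
    let ?c = "if phi F C r ?y - philb F C r \<ge> 0 then alpha k else 0"
    let ?i = "istar k"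
    have b1: "norm (jac F ?y) \<le> B1" "norm (?y - closest_point C ?y) \<le> B2"
      "norm (transpose (jac F ?y) *v (F ?y - projQp Q (F ?y))) \<le> B3" using B1 B2 B3 xin[of k] by auto
    have ji: "norm (jac F ?y $ ?i) \<le> B1" by (rule order_trans[OF Finite_Cartesian_Product.norm_nth_le b1(1)])
    have ri: "\<bar>r $ ?i\<bar> \<le> norm r" using Finite_Cartesian_Product.norm_nth_le[of r "?i"] by simp
    have c: "0 \<le> \<bar>?c\<bar>" "\<bar>?c\<bar> \<le> ahi" using al[of k] by auto
    have "norm (d k) \<le> \<bar>?c\<bar> * (\<bar>r $ ?i\<bar> * norm (jac F ?y $ ?i)) + \<bar>beta k\<bar> * norm (?y - closest_point C ?y)
       + \<bar>gamma k\<bar> * norm (transpose (jac F ?y) *v (F ?y - projQp Q (F ?y)))"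
      unfolding d_def abp_dir_def
      by (rule order_trans[OF norm_triangle_ineq] order_trans[OF add_mono[OF norm_triangle_ineq order_refl]])+
         (simp only: norm_scaleR order_refl)
    also have "\<dots> \<le> ahi * (norm r * B1) + bhi * B2 + ghi * B3"
    proof (intro add_mono mult_mono)
      show "\<bar>beta k\<bar> \<le> bhi" "\<bar>gamma k\<bar> \<le> ghi" using bl[of k] gl[of k] by auto
      show "0 \<le> bhi" "0 \<le> ghi" "0 \<le> ahi" using al[of k] bl[of k] gl[of k] by linarith+
    qed (use b1 ji ri c in auto)
    finally show ?thesis unfolding Dm_def by (simp add: mult.assoc)
  qed
  define E where "E = max mu Dm"
  have E_pos: "E > 0" unfolding E_def using mu_pos by auto
  have eta_le: "eta k \<le> E" for k unfolding eta_def E_def using dbound[of k] by auto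
  have key: "2 / E * (lam k * P k) \<le> a k - a (Suc k) + (lam k)^2" for k
  proof -
    have "lam k / E \<le> t k" unfolding t_def
      using A5(1) eta_pos[of k] eta_le[of k] by (intro divide_left_mono) (auto intro: less_imp_le)
    then have "lam k / E * P k \<le> t k * P k" using P_nn[of k] by (rule mult_right_mono)
    moreover have "2 / E * (lam k * P k) = 2 * (lam k / E * P k)" by simp
    ultimately show ?thesis using ineq[of k] by linarith
  qed
  have psum: "(\<Sum>k<n. lam k * P k) \<le> E / 2 * (a 0 + S)" for n
  proof -
    have "2 / E * (\<Sum>k<n. lam k * P k) = (\<Sum>k<n. 2 / E * (lam k * P k))" by (simp add: sum_distrib_left)
    also have "\<dots> \<le> (\<Sum>k<n. (a k - a (Suc k)) + (lam k)^2)" by (rule sum_mono) (use key in auto)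
    also have "\<dots> = a 0 - a n + (\<Sum>k<n. (lam k)^2)"
      by (simp add: sum.distrib sum_lessThan_telescope')
    also have "\<dots> \<le> a 0 + S"
    proof -
      have "a n \<ge> 0" unfolding a_def by simp
      moreover have "(\<Sum>k<n. (lam k)^2) \<le> S" unfolding S_def by (rule sum_le_suminf[OF A5(3)]) auto
      ultimately show ?thesis by linarith
    qed
    finally have "2 / E * (\<Sum>k<n. lam k * P k) \<le> a 0 + S" .
    then show ?thesis using E_pos by (simp add: field_simps)
  qed
  show ?thesis unfolding P_def[symmetric]
    by (rule summableI_nonneg_bounded[OF _ psum]) (use A5(1) P_nn in \<open>simp add: less_imp_le\<close>)
qed

end
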